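(* Let $E$ and $E^c=\partial\overline{\mathcal{G}}\setminus E$ be nonempty clopen subsets of $\partial\overline{\mathcal{G}}$. Let $f:\overline{\mathcal{G}}\to\mathbb{R}$ be harmonic with $f(x)=C\ge 0$ for $x\in E$ and $f(x)>C$ for $x\in E^c$. Let $\epsilon>0$ be such that $N_\epsilon(E)$ has finite volume. Let $t$ be a regular value of $f$ with $C<t<\min_{x\in E^c}f(x)$ and $\{x: f(x)\le t\}\subset N_\epsilon(E)$. Then every $x\in\mathcal{G}$ with $f(x)=t$ can be connected to $\partial\overline{\mathcal{G}}$ by a path $\gamma$ lying in the set $\{f\le t\}$, and $\gamma$ can be chosen to have a single limit point in $\partial\overline{\mathcal{G}}$.
   Context: $\mathcal{G}$ is a connected, locally finite metric graph with countable vertex set and countable edge set. Each edge has a positive length and is identified with an interval. $\mathcal{G}$ carries the geodesic distance $d$, and $\overline{\mathcal{G}}$ is its metric completion. A designated set of vertices, containing all vertices of degree $1$, forms the boundary vertices. $\mathcal{G}_{int}$ is $\mathcal{G}$ minus the boundary vertices, and $\partial\overline{\mathcal{G}}=\overline{\mathcal{G}}\setminus\mathcal{G}_{int}$. Standing assumptions: $\overline{\mathcal{G}}$ is compact and $\partial\overline{\mathcal{G}}$ is totally disconnected. Clopen means open and closed in $\partial\overline{\mathcal{G}}$. $N_\epsilon(E)$ is the union of open balls of radius $\epsilon$ about points of $E$, and its volume is the Lebesgue measure of its intersection with the edges. A function $f:\overline{\mathcal{G}}\to\mathbb{R}$ is harmonic if it is continuous, linear on each edge, and satisfies $\sum_{e\sim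 v}\partial_\nu f_e(v)=0$ at every interior vertex $v$, where $\partial_\nu f_e(v)$ is the derivative of $f_e$ at $v$ in the direction from $v$ into $e$. A point $x\in\mathcal{G}$ is a critical point of $f$ if $x$ is a vertex or $f'(x)=0$. A number $c$ is a critical value if $f^{-1}(c)$ contains a critical point. Values in the range of $f$ that are not critical values are regular values. A path may be finite (traversing finitely many edges) or infinite: $\gamma:[0,L)\to\mathcal{G}$ traversing an infinite sequence of successively adjacent edges with total length $L<\infty$. Its limit points are the limits in $\overline{\mathcal{G}}$ of $\gamma(s_k)$ as $s_k\to L$. *)

theory Defs
  imports "HOL-Analysis.Analysis"
begin

text \<open>Points of a metric graph: a vertex, or the point at distance s from the
  initial endpoint of edge e (meaningful for 0 < s < length e).\<close>
datatype ('v, 'e) gpt = GV 'v | GE 'e real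

record ('v, 'e) mgraph =
  verts  :: "'v set"
  edges  :: "'e set"
  ends   :: "'e \<Rightarrow> 'v \<times> 'v"
  elen   :: "'e \<Rightarrow> real"
  bverts :: "'v set"

definition gpos :: "('v, 'e) mgraph \<Rightarrow> 'e \<Rightarrow> real \<Rightarrow> ('v, 'e) gpt" where
  "gpos G e s = (if s = 0 then GV (fst (ends G e))
                 else if s = elen G e then GV (snd (ends G e)) else GE e s)"

definition gpts :: "('v, 'e) mgraph \<Rightarrow> ('v, 'e) gpt set" where
  "gpts G = GV ` verts G \<union> {GE e s | e s. e \<in> edges G \<and> 0 < s \<and> s < elen G e}"

definition gint :: "('v, 'e) mgraph \<Rightarrow> ('v, 'e) gpt set" where
  "gint G = gpts G - GV ` bverts G"

definition incident :: "('v, 'e) mgraph \<Rightarrow> 'v \<Rightarrow> 'e set" where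
  "incident G v = {e \<in> edges G. fst (ends G e) = v \<or> snd (ends G e) = v}"

text \<open>Degree (a loop counts twice).\<close>
definition degree :: "('v, 'e) mgraph \<Rightarrow> 'v \<Rightarrow> nat" where
  "degree G v = card {e \<in> edges G. fst (ends G e) = v} + card {e \<in> edges G. snd (ends G e) = v}"

text \<open>Finite chains of segments along edges: (e, a, b) runs along edge e from
  parameter a to parameter b. These are the finite paths; their length is
  the sum of the segment lengths.\<close>
definition chain_from_to :: "('v, 'e) mgraph \<Rightarrow> ('v, 'e) gpt \<Rightarrow> ('v, 'e) gpt
    \<Rightarrow> ('e \<times> real \<times> real) list \<Rightarrow> bool" where
  "chain_from_to G x y cs \<longleftrightarrow>
     (cs = [] \<and> x = y) \<or>
     (cs \<noteq> [] \<and>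
      (\<forall>(e, a, b) \<in> set cs. e \<in> edges G \<and> a \<in> {0..elen G e} \<and> b \<in> {0..elen G e}) \<and>
      (case hd cs of (e, a, b) \<Rightarrow> gpos G e a = x) \<and>
      (case last cs of (e, a, b) \<Rightarrow> gpos G e b = y) \<and>
      (\<forall>i. Suc i < length cs \<longrightarrow>
         (case cs ! i of (e, a, b) \<Rightarrow> gpos G e b) =
         (case cs ! Suc i of (e, a, b) \<Rightarrow> gpos G e a)))"

definition chain_len :: "('e \<times> real \<times> real) list \<Rightarrow> real" where
  "chain_len cs = (\<Sum>(e, a, b) \<leftarrow> cs. \<bar>b - a\<bar>)"

definition gdist :: "('v, 'e) mgraph \<Rightarrow> ('v, 'e) gpt \<Rightarrow> ('v, 'e) gpt \<Rightarrow> real" where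
  "gdist G x y = Inf {chain_len cs | cs. chain_from_to G x y cs}"

definition metric_graph :: "('v, 'e) mgraph \<Rightarrow> bool" where
  "metric_graph G \<longleftrightarrow>
     countable (verts G) \<and> countable (edges G) \<and>
     (\<forall>e \<in> edges G. fst (ends G e) \<in> verts G \<and> snd (ends G e) \<in> verts G \<and> 0 < elen G e) \<and>
     (\<forall>v \<in> verts G. finite (incident G v)) \<and>
     (\<forall>x \<in> gpts G. \<forall>y \<in> gpts G. \<exists>cs. chain_from_to G x y cs) \<and>
     bverts G \<subseteq> verts G \<and>
     {v \<in> verts G. degree G v = 1} \<subseteq> bverts G"

text \<open>Metric completion, up to isometry: an isometric embedding \<iota> of the graph
  (with geodesic distance) into a metric space, with M the closure of the
  image and M complete.\<close>
definition is_completion :: "('v, 'e) mgraph \<Rightarrow> (('v, 'e) gpt \<Rightarrow> 'm::metric_space) \<Rightarrow> 'm set \<Rightarrow> bool" where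
  "is_completion G \<iota> M \<longleftrightarrow>
     (\<forall>x \<in> gpts G. \<forall>y \<in> gpts G. dist (\<iota> x) (\<iota> y) = gdist G x y) \<and>
     M = closure (\<iota> ` gpts G) \<and> complete M"

definition bdry :: "('v, 'e) mgraph \<Rightarrow> (('v, 'e) gpt \<Rightarrow> 'm::metric_space) \<Rightarrow> 'm set \<Rightarrow> 'm set" where
  "bdry G \<iota> M = M - \<iota> ` gint G"

definition totally_disconnected :: "'a::topological_space set \<Rightarrow> bool" where
  "totally_disconnected S \<longleftrightarrow> (\<forall>T. T \<subseteq> S \<and> connected T \<longrightarrow> (\<exists>a. T \<subseteq> {a}))"

definition clopen_in :: "'a::topological_space set \<Rightarrow> 'a set \<Rightarrow> bool" where
  "clopen_in S A \<longleftrightarrow> openin (top_of_set S) A \<and> closedin (top_of_set S) A"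

definition outward_deriv :: "('v, 'e) mgraph \<Rightarrow> (('v, 'e) gpt \<Rightarrow> 'm) \<Rightarrow> ('m \<Rightarrow> real)
    \<Rightarrow> 'v \<Rightarrow> 'e \<Rightarrow> real" where
  "outward_deriv G \<iota> f v e =
     (let sl = (f (\<iota> (gpos G e (elen G e))) - f (\<iota> (gpos G e 0))) / elen G e in
      (if fst (ends G e) = v then sl else 0) + (if snd (ends G e) = v then - sl else 0))"

definition harmonic :: "('v, 'e) mgraph \<Rightarrow> (('v, 'e) gpt \<Rightarrow> 'm::metric_space) \<Rightarrow> 'm set
    \<Rightarrow> ('m \<Rightarrow> real) \<Rightarrow> bool" where
  "harmonic G \<iota> M f \<longleftrightarrow>
     continuous_on M f \<and>
     (\<forall>e \<in> edges G. \<exists>a b. \<forall>s \<in> {0..elen G e}. f (\<iota> (gpos G e s)) = a + b * s) \<and>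
     (\<forall>v \<in> verts G - bverts G. (\<Sum>e \<in> incident G v. outward_deriv G \<iota> f v e) = 0)"

definition critical_point :: "('v, 'e) mgraph \<Rightarrow> (('v, 'e) gpt \<Rightarrow> 'm) \<Rightarrow> ('m \<Rightarrow> real)
    \<Rightarrow> ('v, 'e) gpt \<Rightarrow> bool" where
  "critical_point G \<iota> f x \<longleftrightarrow> x \<in> gpts G \<and>
     (x \<in> GV ` verts G \<or>
      (\<exists>e s. x = GE e s \<and> ((\<lambda>r. f (\<iota> (gpos G e r))) has_real_derivative 0) (at s)))"

definition critical_value :: "('v, 'e) mgraph \<Rightarrow> (('v, 'e) gpt \<Rightarrow> 'm) \<Rightarrow> ('m \<Rightarrow> real)
    \<Rightarrow> real \<Rightarrow> bool" where
  "critical_value G \<iota> f c \<longleftrightarrow> (\<exists>x. critical_point G \<iota> f x \<and> f (\<iota> x) = c)"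

definition regular_value :: "('v, 'e) mgraph \<Rightarrow> (('v, 'e) gpt \<Rightarrow> 'm) \<Rightarrow> 'm set
    \<Rightarrow> ('m \<Rightarrow> real) \<Rightarrow> real \<Rightarrow> bool" where
  "regular_value G \<iota> M f t \<longleftrightarrow> t \<in> f ` M \<and> \<not> critical_value G \<iota> f t"

definition nbhd :: "'m::metric_space set \<Rightarrow> 'm set \<Rightarrow> real \<Rightarrow> 'm set" where
  "nbhd M E \<epsilon> = M \<inter> (\<Union>x \<in> E. ball x \<epsilon>)"

definition volume :: "('v, 'e) mgraph \<Rightarrow> (('v, 'e) gpt \<Rightarrow> 'm) \<Rightarrow> 'm set \<Rightarrow> ennreal" where
  "volume G \<iota> S = (\<integral>\<^sup>+ e. emeasure lborel {s \<in> {0<..<elen G e}. \<iota> (GE e s) \<in> S} \<partial>count_space (edges G))"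

text \<open>A (finite or infinite) path, parametrised by (at most) arc length:
  \<gamma> : [0,L) \<rightarrow> graph, 1-Lipschitz for the geodesic distance. Its total length
  is at most L < \<infinity>. A finite path ending at a point of the graph is the
  case where the limit at L is that endpoint.\<close>
definition graph_path :: "('v, 'e) mgraph \<Rightarrow> (real \<Rightarrow> ('v, 'e) gpt) \<Rightarrow> real \<Rightarrow> bool" where
  "graph_path G \<gamma> L \<longleftrightarrow> 0 < L \<and>
     (\<forall>s \<in> {0..<L}. \<gamma> s \<in> gpts G) \<and>
     (\<forall>s \<in> {0..<L}. \<forall>s' \<in> {0..<L}. gdist G (\<gamma> s) (\<gamma> s') \<le> \<bar>s - s'\<bar>)"

end

theory Submission
  imports Defs
begin


lemma chain_Nil: "chain_from_to G x y [] \<longleftrightarrow> x = y"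
  by (simp add: chain_from_to_def)

lemma chain_Cons: "chain_from_to G x y ((e,a,b) # rest) \<longleftrightarrow>
   e \<in> edges G \<and> a \<in> {0..elen G e} \<and> b \<in> {0..elen G e} \<and> gpos G e a = x \<and>
   (if rest = [] then gpos G e b = y else chain_from_to G (gpos G e b) y rest)"
proof (cases rest)
  case Nil
  then show ?thesis by (auto simp: chain_from_to_def)
next
  case (Cons c rest')
  obtain e' a' b' where c: "c = (e',a',b')" by (cases c) auto
  have idx: "(\<forall>i. Suc i < length ((e,a,b) # rest) \<longrightarrow>
         (case ((e,a,b) # rest) ! i of (e, a, b) \<Rightarrow> gpos G e b) =
         (case ((e,a,b) # rest) ! Suc i of (e, a, b) \<Rightarrow> gpos G e a)) \<longleftrightarrow>
        gpos G e b = gpos G e' a' \<and>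
        (\<forall>i. Suc i < length rest \<longrightarrow>
         (case rest ! i of (e, a, b) \<Rightarrow> gpos G e b) =
         (case rest ! Suc i of (e, a, b) \<Rightarrow> gpos G e a))" (is "?L \<longleftrightarrow> ?R")
  proof
    assume L: ?L
    have 1: "gpos G e b = gpos G e' a'" using L[rule_format, of 0] Cons c by simp
    have 2: "(case rest ! i of (e, a, b) \<Rightarrow> gpos G e b) =
         (case rest ! Suc i of (e, a, b) \<Rightarrow> gpos G e a)" if "Suc i < length rest" for i
      using L[rule_format, of "Suc i"] that by simp
    show ?R using 1 2 by blast
  next
    assume R: ?R
    show ?L
    proof (intro allI impI)
      fix i assume i: "Suc i < length ((e,a,b) # rest)"
      show "(case ((e,a,b) # rest) ! i of (e, a, b) \<Rightarrow> gpos G e b) =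
         (case ((e,a,b) # rest) ! Suc i of (e, a, b) \<Rightarrow> gpos G e a)"
      proof (cases i)
        case 0 then show ?thesis using R Cons c by simp
      next
        case (Suc j) then show ?thesis using R i by simp
      qed
    qed
  qed
  show ?thesis unfolding chain_from_to_def
    using idx Cons c by (auto simp: chain_from_to_def)
qed

lemma chain_append: "chain_from_to G x y c1 \<Longrightarrow> chain_from_to G y z c2 \<Longrightarrow> chain_from_to G x z (c1 @ c2)"
proof (induction c1 arbitrary: x)
  case Nil then show ?case by (simp add: chain_Nil)
next
  case (Cons c c1)
  obtain e a b where c: "c = (e,a,b)" by (cases c) auto
  show ?case
  proof (cases "c1 = []")
    case True
    then show ?thesis using Cons.prems c by (cases c2) (auto simp: chain_Cons chain_Nil)
  next
    case False
    then show ?thesis using Cons c by (auto simp: chain_Cons)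
  qed
qed

lemma chain_len_Cons: "chain_len ((e,a,b) # cs) = \<bar>b - a\<bar> + chain_len cs"
  by (simp add: chain_len_def)

lemma chain_len_append: "chain_len (c1 @ c2) = chain_len c1 + chain_len c2"
  by (simp add: chain_len_def)

lemma chain_len_nonneg: "chain_len cs \<ge> 0"
  unfolding chain_len_def by (induction cs) auto

lemma gdist_le: "chain_from_to G x y cs \<Longrightarrow> gdist G x y \<le> chain_len cs"
  unfolding gdist_def
  by (rule cInf_lower) (auto intro!: bdd_belowI[where m=0] simp: chain_len_nonneg)

lemma gdist_ge: "chain_from_to G x y cs0 \<Longrightarrow> (\<And>cs. chain_from_to G x y cs \<Longrightarrow> c \<le> chain_len cs) \<Longrightarrow> c \<le> gdist G x y"
  unfolding gdist_def by (rule cInf_greatest) auto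

lemma gdist_refl_le: "gdist G x x \<le> 0"
  using gdist_le[of G x x "[]"] by (simp add: chain_Nil chain_len_def)

lemma gdist_seg: "e \<in> edges G \<Longrightarrow> a \<in> {0..elen G e} \<Longrightarrow> b \<in> {0..elen G e} \<Longrightarrow>
   gdist G (gpos G e a) (gpos G e b) \<le> \<bar>b - a\<bar>"
  using gdist_le[of G "gpos G e a" "gpos G e b" "[(e,a,b)]"]
  by (simp add: chain_Cons chain_len_def)

lemma conn: "metric_graph G \<Longrightarrow> x \<in> gpts G \<Longrightarrow> y \<in> gpts G \<Longrightarrow> \<exists>cs. chain_from_to G x y cs"
  unfolding metric_graph_def by blast

lemma gdist_triangle:
  assumes "metric_graph G" "x \<in> gpts G" "y \<in> gpts G" "z \<in> gpts G"
  shows "gdist G x z \<le> gdist G x y + gdist G y z"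
proof -
  obtain c1 where c1: "chain_from_to G x y c1" using conn assms by blast
  obtain c2 where c2: "chain_from_to G y z c2" using conn assms by blast
  have "gdist G x z - chain_len d2 \<le> gdist G x y" if d2: "chain_from_to G y z d2" for d2
  proof (rule gdist_ge[OF c1])
    fix d1 assume "chain_from_to G x y d1"
    then have "gdist G x z \<le> chain_len (d1 @ d2)" using gdist_le chain_append d2 by blast
    then show "gdist G x z - chain_len d2 \<le> chain_len d1" by (simp add: chain_len_append)
  qed
  then have "gdist G x z - gdist G x y \<le> gdist G y z"
    by (intro gdist_ge[OF c2]) force
  then show ?thesis by simp
qed

lemma lip_chain:
  assumes h: "\<And>e a b. e \<in> edges G \<Longrightarrow> a \<in> {0..elen G e} \<Longrightarrow> b \<in> {0..elen G e} \<Longrightarrow>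
      \<bar>h (gpos G e a) - h (gpos G e b)\<bar> \<le> \<bar>a - b\<bar>"
  shows "chain_from_to G x y cs \<Longrightarrow> \<bar>h x - h y\<bar> \<le> chain_len cs"
proof (induction cs arbitrary: x)
  case Nil then show ?case by (simp add: chain_Nil chain_len_def)
next
  case (Cons c cs)
  obtain e a b where c: "c = (e,a,b)" by (cases c) auto
  show ?case
  proof (cases "cs = []")
    case True
    then show ?thesis using Cons.prems c h[of e a b] by (auto simp: chain_Cons chain_len_def)
  next
    case False
    then have *: "chain_from_to G (gpos G e b) y cs" and **: "e \<in> edges G" "a \<in> {0..elen G e}"
      "b \<in> {0..elen G e}" "gpos G e a = x"
      using Cons.prems c by (auto simp: chain_Cons)
    have "\<bar>h (gpos G e b) - h y\<bar> \<le> chain_len cs" using Cons.IH[OF *] .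
    moreover have "\<bar>h x - h (gpos G e b)\<bar> \<le> \<bar>b - a\<bar>" using h[of e a b] ** by simp
    ultimately show ?thesis using c by (simp add: chain_len_Cons)
  qed
qed

lemma lip_gdist:
  assumes "metric_graph G" "x \<in> gpts G" "y \<in> gpts G"
   and h: "\<And>e a b. e \<in> edges G \<Longrightarrow> a \<in> {0..elen G e} \<Longrightarrow> b \<in> {0..elen G e} \<Longrightarrow>
      \<bar>h (gpos G e a) - h (gpos G e b)\<bar> \<le> \<bar>a - b\<bar>"
  shows "\<bar>h x - h y\<bar> \<le> gdist G x y"
proof -
  obtain c where "chain_from_to G x y c" using conn assms by blast
  then show ?thesis using gdist_ge lip_chain[OF h] by blast
qed




lemma gpos_gpts: "metric_graph G \<Longrightarrow> e \<in> edges G \<Longrightarrow> s \<in> {0..elen G e} \<Longrightarrow> gpos G e s \<in> gpts G"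
  unfolding metric_graph_def gpos_def gpts_def by auto

lemma gpos_0: "gpos G e 0 = GV (fst (ends G e))" by (simp add: gpos_def)
lemma gpos_len: "elen G e \<noteq> 0 \<Longrightarrow> gpos G e (elen G e) = GV (snd (ends G e))" by (simp add: gpos_def)
lemma gpos_int: "0 < s \<Longrightarrow> s < elen G e \<Longrightarrow> gpos G e s = GE e s" by (simp add: gpos_def)

lemma min_lip: "\<bar>min a b - min c d\<bar> \<le> max \<bar>a - c\<bar> \<bar>b - d\<bar>" for a b c d :: real
  by (auto simp: min_def max_def abs_if)

lemma gint_sep:
  assumes G: "metric_graph G" and y: "y \<in> gint G"
  shows "\<exists>\<delta>>0. \<forall>v \<in> verts G. GV v \<noteq> y \<longrightarrow> \<delta> \<le> gdist G y (GV v)"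
proof -
  have ypts: "y \<in> gpts G" using y by (simp add: gint_def)
  have elenpos: "\<And>e. e \<in> edges G \<Longrightarrow> 0 < elen G e" using G by (simp add: metric_graph_def)
  have vpts: "\<And>v. v \<in> verts G \<Longrightarrow> GV v \<in> gpts G" by (simp add: gpts_def)
  show ?thesis
  proof (cases y)
    case (GV w)
    then have w: "w \<in> verts G" using ypts by (auto simp: gpts_def)
    have fin: "finite (incident G w)" using G w by (simp add: metric_graph_def)
    define \<delta> where "\<delta> = Min (insert 1 ((\<lambda>e. elen G e / 2) ` incident G w))"
    have dpos: "\<delta> > 0" unfolding \<delta>_def using fin elenpos by (auto simp: incident_def)
    have dle: "\<delta> \<le> elen G e / 2" if "e \<in> incident G w" for e
    proof -
      have "Min (insert 1 ((\<lambda>e. elen G e / 2) ` incident G w)) \<le> elen G e / 2"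
        using fin that by (intro Min_le) auto
      then show ?thesis by (simp add: \<delta>_def)
    qed
    define h where "h z = (case z of GV v \<Rightarrow> if v = w then 0 else \<delta>
       | GE e s \<Rightarrow> if e \<in> incident G w then
           min \<delta> (min (if fst (ends G e) = w then s else \<delta>) (if snd (ends G e) = w then elen G e - s else \<delta>))
         else \<delta>)" for z
    have hlip: "\<bar>h (gpos G e a) - h (gpos G e b)\<bar> \<le> \<bar>a - b\<bar>"
      if e: "e \<in> edges G" and ab: "a \<in> {0..elen G e}" "b \<in> {0..elen G e}" for e a b
    proof (cases "e \<in> incident G w")
      case True
      define g where "g s = min \<delta> (min (if fst (ends G e) = w then s else \<delta>) (if snd (ends G e) = w then elen G e - s else \<delta>))" for s
      have le: "\<delta> \<le> elen G e / 2" using dle True by blast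
      have hg: "h (gpos G e s) = g s" if sr: "s \<in> {0..elen G e}" for s
      proof -
        have l: "0 < elen G e" using elenpos e by blast
        consider "s = 0" | "s = elen G e" | "0 < s \<and> s < elen G e" using sr by (auto simp: less_le)
        then show ?thesis
        proof cases
          case 1 then show ?thesis using l le dpos unfolding h_def g_def gpos_def
            by (auto simp: min_def)
        next
          case 2 then show ?thesis using l le dpos unfolding h_def g_def gpos_def
            by (auto simp: min_def)
        next
          case 3 then show ?thesis using True unfolding h_def g_def gpos_def by auto
        qed
      qed
      have "\<bar>g a - g b\<bar> \<le> \<bar>a - b\<bar>"
        unfolding g_def by (auto simp: min_def abs_if)
      then show ?thesis using hg ab by simp
    next
      case False
      then have "fst (ends G e) \<noteq> w" "snd (ends G e) \<noteq> w" using e by (auto simp: incident_def)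
      then have "h (gpos G e s) = \<delta>" for s using False unfolding h_def gpos_def by auto
      then show ?thesis by simp
    qed
    show ?thesis
    proof (intro exI[of _ \<delta>] conjI dpos ballI impI)
      fix v assume v: "v \<in> verts G" "GV v \<noteq> y"
      have "\<bar>h y - h (GV v)\<bar> \<le> gdist G y (GV v)"
        using lip_gdist[OF G ypts vpts[OF v(1)] hlip] by blast
      moreover have "h y = 0" "h (GV v) = \<delta>" using GV v by (auto simp: h_def)
      ultimately show "\<delta> \<le> gdist G y (GV v)" using dpos by simp
    qed
  next
    case (GE e0 s0)
    then have e0: "e0 \<in> edges G" "0 < s0" "s0 < elen G e0" using ypts by (auto simp: gpts_def)
    define \<delta> where "\<delta> = min s0 (elen G e0 - s0)"
    have dpos: "\<delta> > 0" using e0 by (simp add: \<delta>_def)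
    define h where "h z = (case z of GV v \<Rightarrow> if v \<in> verts G then \<delta> else \<delta>
       | GE e s \<Rightarrow> if e = e0 then min \<delta> \<bar>s - s0\<bar> else \<delta>)" for z
    have hlip: "\<bar>h (gpos G e a) - h (gpos G e b)\<bar> \<le> \<bar>a - b\<bar>"
      if e: "e \<in> edges G" and ab: "a \<in> {0..elen G e}" "b \<in> {0..elen G e}" for e a b
    proof (cases "e = e0")
      case True
      define g where "g s = min \<delta> \<bar>s - s0\<bar>" for s
      have hg: "h (gpos G e s) = g s" if sr: "s \<in> {0..elen G e}" for s
      proof -
        consider "s = 0" | "s = elen G e" | "0 < s \<and> s < elen G e" using sr by (auto simp: less_le)
        then show ?thesis
        proof cases
          case 1 then show ?thesis using e0 True unfolding h_def g_def gpos_def \<delta>_def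
            by (auto simp: min_def)
        next
          case 2 then show ?thesis using e0 True unfolding h_def g_def gpos_def \<delta>_def
            by (auto simp: min_def)
        next
          case 3 then show ?thesis using True unfolding h_def g_def gpos_def by auto
        qed
      qed
      have "\<bar>g a - g b\<bar> \<le> \<bar>a - b\<bar>"
        unfolding g_def by (auto simp: min_def abs_if)
      then show ?thesis using hg ab by simp
    next
      case False
      then have "h (gpos G e s) = \<delta>" for s unfolding h_def gpos_def by auto
      then show ?thesis by simp
    qed
    show ?thesis
    proof (intro exI[of _ \<delta>] conjI dpos ballI impI)
      fix v assume v: "v \<in> verts G" "GV v \<noteq> y"
      have "\<bar>h y - h (GV v)\<bar> \<le> gdist G y (GV v)"
        using lip_gdist[OF G ypts vpts[OF v(1)] hlip] by blast
      moreover have "h y = 0" "h (GV v) = \<delta>" using GE dpos by (auto simp: h_def)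
      ultimately show "\<delta> \<le> gdist G y (GV v)" using dpos by simp
    qed
  qed
qed




definition other :: "('v,'e) mgraph \<Rightarrow> 'v \<Rightarrow> 'e \<Rightarrow> 'v" where
  "other G v e = (if fst (ends G e) = v then snd (ends G e) else fst (ends G e))"

lemma aux_div: "(a - b) / c + (b - a) / c = (0::real)"
  by (simp add: add_divide_distrib[symmetric])

lemma aux_neg: "- ((a - b) / c) = (b - a) / (c::real)"
  by (metis minus_diff_eq minus_divide_left)

locale hg =
  fixes G :: "('v, 'e) mgraph" and \<iota> :: "('v, 'e) gpt \<Rightarrow> 'm::metric_space" and M f
  assumes graph: "metric_graph G" and compl: "is_completion G \<iota> M" and harm: "harmonic G \<iota> M f"
begin

definition F where "F v = f (\<iota> (GV v))"

lemma elen_pos: "e \<in> edges G \<Longrightarrow> 0 < elen G e"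
  using graph by (simp add: metric_graph_def)

lemma ends_verts: "e \<in> edges G \<Longrightarrow> fst (ends G e) \<in> verts G \<and> snd (ends G e) \<in> verts G"
  using graph by (simp add: metric_graph_def)

lemma lin:
  assumes e: "e \<in> edges G" and s: "s \<in> {0..elen G e}"
  shows "f (\<iota> (gpos G e s)) = F (fst (ends G e)) + (F (snd (ends G e)) - F (fst (ends G e))) / elen G e * s"
proof -
  obtain a b where ab: "\<forall>s \<in> {0..elen G e}. f (\<iota> (gpos G e s)) = a + b * s"
    using harm e unfolding harmonic_def by blast
  have l: "0 < elen G e" using elen_pos e .
  have a: "a = F (fst (ends G e))" using ab[rule_format, of 0] l by (simp add: gpos_0 F_def)
  have b: "a + b * elen G e = F (snd (ends G e))" using ab[rule_format, of "elen G e"] l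
    by (simp add: gpos_len F_def)
  have "b = (F (snd (ends G e)) - F (fst (ends G e))) / elen G e" using a b l
    by (simp add: field_simps)
  then show ?thesis using ab s a by simp
qed

lemma val_le_max:
  assumes e: "e \<in> edges G" and s: "s \<in> {0..elen G e}"
  shows "f (\<iota> (gpos G e s)) \<le> max (F (fst (ends G e))) (F (snd (ends G e)))"
proof -
  define A where "A = F (fst (ends G e))"
  define B where "B = F (snd (ends G e))"
  define th where "th = s / elen G e"
  have l: "0 < elen G e" using elen_pos e .
  have th: "0 \<le> th" "th \<le> 1" using s l by (auto simp: th_def field_simps)
  have "f (\<iota> (gpos G e s)) = (1 - th) * A + th * B"
    using lin[OF e s] l unfolding A_def B_def th_def by (simp add: field_simps)
  also have "\<dots> \<le> (1 - th) * max A B + th * max A B"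
    using th by (intro add_mono mult_left_mono) auto
  finally show ?thesis by (simp add: A_def B_def algebra_simps)
qed

lemma outward:
  assumes e: "e \<in> edges G"
  shows "outward_deriv G \<iota> f v e =
    (if fst (ends G e) = v then (F (snd (ends G e)) - F (fst (ends G e))) / elen G e else 0) +
    (if snd (ends G e) = v then - ((F (snd (ends G e)) - F (fst (ends G e))) / elen G e) else 0)"
  using elen_pos[OF e] by (simp add: outward_deriv_def Let_def gpos_0 gpos_len F_def)

lemma outward_nz:
  assumes e: "e \<in> incident G v" and nz: "outward_deriv G \<iota> f v e \<noteq> 0"
  shows "fst (ends G e) \<noteq> snd (ends G e)"
    and "outward_deriv G \<iota> f v e = (F (other G v e) - F v) / elen G e"
    and "e \<in> incident G (other G v e)"
    and "other G (other G v e) e = v"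
    and "outward_deriv G \<iota> f (other G v e) e = - outward_deriv G \<iota> f v e"
    and "other G v e \<in> verts G"
proof -
  have ee: "e \<in> edges G" and vv: "fst (ends G e) = v \<or> snd (ends G e) = v"
    using e by (auto simp: incident_def)
  show ne: "fst (ends G e) \<noteq> snd (ends G e)" using nz outward[OF ee, of v] by (auto split: if_splits)
  show "outward_deriv G \<iota> f v e = (F (other G v e) - F v) / elen G e"
  proof (cases "fst (ends G e) = v")
    case True
    then show ?thesis using outward[OF ee, of v] ne by (simp add: other_def)
  next
    case False
    then have "snd (ends G e) = v" using vv by blast
    then show ?thesis using outward[OF ee, of v] ne False
      by (simp add: other_def aux_neg)
  qed
  show "e \<in> incident G (other G v e)" using ee by (auto simp: incident_def other_def)
  show "other G (other G v e) e = v" using vv ne by (auto simp: other_def)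
  show "outward_deriv G \<iota> f (other G v e) e = - outward_deriv G \<iota> f v e"
  proof (cases "fst (ends G e) = v")
    case True
    then show ?thesis using outward[OF ee, of v] outward[OF ee, of "other G v e"] ne
      by (simp add: other_def)
  next
    case False
    then have "snd (ends G e) = v" using vv by blast
    then show ?thesis using outward[OF ee, of v] outward[OF ee, of "other G v e"] ne False
      by (simp add: other_def)
  qed
  show "other G v e \<in> verts G" using ends_verts[OF ee] by (auto simp: other_def)
qed

lemma exists_down:
  assumes v: "v \<in> verts G - bverts G" and e: "e \<in> incident G v" and pos: "outward_deriv G \<iota> f v e > 0"
  shows "\<exists>e' \<in> incident G v. outward_deriv G \<iota> f v e' < 0"
proof (rule ccontr)
  assume "\<not> ?thesis"
  then have nn: "\<forall>e' \<in> incident G v. outward_deriv G \<iota> f v e' \<ge> 0" by (auto simp: not_less)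
  have fin: "finite (incident G v)" using graph v by (simp add: metric_graph_def)
  have "outward_deriv G \<iota> f v e \<le> (\<Sum>e' \<in> incident G v. outward_deriv G \<iota> f v e')"
    using fin e nn by (intro member_le_sum) auto
  moreover have "(\<Sum>e' \<in> incident G v. outward_deriv G \<iota> f v e') = 0"
    using harm v unfolding harmonic_def by blast
  ultimately show False using pos by simp
qed

definition nxt where "nxt v = (SOME e. e \<in> incident G v \<and> outward_deriv G \<iota> f v e < 0)"

lemma nxt:
  assumes v: "v \<in> verts G - bverts G" and e: "e \<in> incident G v" and pos: "outward_deriv G \<iota> f v e > 0"
  shows "nxt v \<in> incident G v" "outward_deriv G \<iota> f v (nxt v) < 0"
  using someI_ex[OF exists_down[OF assms, unfolded Bex_def]] unfolding nxt_def by auto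

end




lemma sum_le_nn_count:
  assumes "finite A" "A \<subseteq> B"
  shows "(\<Sum>a\<in>A. g a) \<le> (\<integral>\<^sup>+x. g x \<partial>count_space B)"
proof -
  have "(\<Sum>a\<in>A. g a) = (\<integral>\<^sup>+x. g x \<partial>count_space A)" using assms by (simp add: nn_integral_count_space_finite)
  also have "\<dots> = (\<integral>\<^sup>+x. g x * indicator A x \<partial>count_space UNIV)" by (rule nn_integral_count_space_indicator) simp
  also have "\<dots> \<le> (\<integral>\<^sup>+x. g x * indicator B x \<partial>count_space UNIV)"
    using assms by (intro nn_integral_mono) (auto split: split_indicator)
  also have "\<dots> = (\<integral>\<^sup>+x. g x \<partial>count_space B)" by (rule nn_integral_count_space_indicator[symmetric]) simp
  finally show ?thesis .
qed

locale desc = hg +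
  fixes e0 s0 S
  assumes e0: "e0 \<in> edges G" and s0: "0 < s0" "s0 < elen G e0"
    and neq: "F (fst (ends G e0)) \<noteq> F (snd (ends G e0))"
    and vol: "volume G \<iota> S < \<infinity>"
    and sub: "{x \<in> M. f x \<le> f (\<iota> (GE e0 s0))} \<subseteq> S"
begin

abbreviation "t \<equiv> f (\<iota> (GE e0 s0))"
abbreviation "A0 \<equiv> F (fst (ends G e0))"
abbreviation "B0 \<equiv> F (snd (ends G e0))"
abbreviation "len0 \<equiv> elen G e0"

definition "u0 = (if B0 < A0 then snd (ends G e0) else fst (ends G e0))"
definition "d0 = (if B0 < A0 then len0 - s0 else s0)"
definition "first s = (if B0 < A0 then s0 + s else s0 - s)"
definition "w n = rec_nat u0 (\<lambda>_ v. if v \<in> bverts G then v else other G v (nxt v)) n"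
definition "stop n \<longleftrightarrow> w n \<in> bverts G"
definition "ed n = nxt (w n)"
definition "lnn n = (if stop n then 0 else elen G (ed n))"
definition "T n = d0 + (\<Sum>j<n. lnn j)"
definition "seg n r = gpos G (ed n) (if fst (ends G (ed n)) = w n then r else elen G (ed n) - r)"

lemma w_0: "w 0 = u0" by (simp add: w_def)
lemma w_Suc: "w (Suc n) = (if stop n then w n else other G (w n) (ed n))"
  by (simp add: w_def stop_def ed_def)

lemma len0: "0 < len0" using elen_pos[OF e0] .

lemma t_val: "t = A0 + (B0 - A0) / len0 * s0"
  using lin[OF e0, of s0] s0 by (simp add: gpos_int)

lemma ne0: "fst (ends G e0) \<noteq> snd (ends G e0)" using neq by auto

lemma d0_pos: "0 < d0" using s0 by (simp add: d0_def)

lemma first_range: "s \<in> {0..d0} \<Longrightarrow> first s \<in> {0..len0}"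
  using s0 by (auto simp: first_def d0_def)

lemma first_0: "gpos G e0 (first 0) = GE e0 s0"
  using s0 by (simp add: first_def gpos_int)

lemma first_d0: "gpos G e0 (first d0) = GV u0"
  using s0 ne0 len0 by (auto simp: first_def d0_def u0_def gpos_def)

lemma F_u0: "F u0 < t"
proof (cases "B0 < A0")
  case True
  have "(B0 - A0) / len0 * s0 > (B0 - A0) / len0 * len0"
    using True s0 len0 by (intro mult_strict_left_mono_neg) (auto simp: divide_neg_pos)
  then show ?thesis using True t_val len0 by (simp add: u0_def)
next
  case False
  then have "A0 < B0" using neq by auto
  then have "(B0 - A0) / len0 * s0 > 0" using s0 len0 by simp
  then show ?thesis using False t_val by (simp add: u0_def)
qed

lemma first_val: "s \<in> {0..d0} \<Longrightarrow> f (\<iota> (gpos G e0 (first s))) \<le> t"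
proof -
  assume s: "s \<in> {0..d0}"
  have eq: "f (\<iota> (gpos G e0 (first s))) = A0 + (B0 - A0) / len0 * first s"
    using lin[OF e0 first_range[OF s]] .
  show ?thesis
  proof (cases "B0 < A0")
    case True
    have neg: "(B0 - A0) / len0 < 0" using True len0 by (simp add: divide_neg_pos)
    have "(B0 - A0) / len0 * (s0 + s) \<le> (B0 - A0) / len0 * s0"
      using neg s by (intro mult_left_mono_neg) auto
    then show ?thesis using eq t_val True by (simp add: first_def)
  next
    case False
    have "(B0 - A0) / len0 * (s0 - s) \<le> (B0 - A0) / len0 * s0"
      using False s len0 by (intro mult_left_mono) auto
    then show ?thesis using eq t_val False by (simp add: first_def)
  qed
qed

lemma u0_props: "u0 \<in> verts G" "e0 \<in> incident G u0" "outward_deriv G \<iota> f u0 e0 > 0"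
proof -
  show "u0 \<in> verts G" using ends_verts[OF e0] by (simp add: u0_def)
  show "e0 \<in> incident G u0" using e0 by (auto simp: incident_def u0_def)
  show "outward_deriv G \<iota> f u0 e0 > 0"
  proof (cases "B0 < A0")
    case True
    then show ?thesis using outward[OF e0, of u0] ne0 len0 by (simp add: u0_def divide_neg_pos)
  next
    case False
    then have "A0 < B0" using neq by auto
    then show ?thesis using outward[OF e0, of u0] ne0 len0 False by (simp add: u0_def)
  qed
qed

lemma inv: "w n \<in> verts G \<and> (\<not> stop n \<longrightarrow> (\<exists>e \<in> incident G (w n). outward_deriv G \<iota> f (w n) e > 0))"
proof (induction n)
  case 0 then show ?case using u0_props by (auto simp: w_0)
next
  case (Suc n)
  show ?case
  proof (cases "stop n")
    case True
    then show ?thesis using Suc by (simp add: w_Suc stop_def)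
  next
    case False
    then obtain e where e: "e \<in> incident G (w n)" "outward_deriv G \<iota> f (w n) e > 0"
      using Suc by blast
    have wn: "w n \<in> verts G - bverts G" using Suc False by (simp add: stop_def)
    note nx = nxt[OF wn e]
    have nz: "outward_deriv G \<iota> f (w n) (ed n) \<noteq> 0" using nx by (simp add: ed_def)
    note on = outward_nz[OF nx(1)[folded ed_def] nz]
    have ws: "w (Suc n) = other G (w n) (ed n)" using False by (simp add: w_Suc)
    have neg: "outward_deriv G \<iota> f (w n) (ed n) < 0" using nx(2) by (simp add: ed_def)
    have "0 < outward_deriv G \<iota> f (w (Suc n)) (ed n)" using on(5) neg ws by simp
    moreover have "ed n \<in> incident G (w (Suc n))" using on(3) ws by simp
    moreover have "w (Suc n) \<in> verts G" using on(6) ws by simp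
    ultimately show ?thesis by blast
  qed
qed

lemma step:
  assumes ns: "\<not> stop n"
  shows "ed n \<in> incident G (w n)" "ed n \<in> edges G" "w (Suc n) = other G (w n) (ed n)"
    "F (w (Suc n)) < F (w n)" "fst (ends G (ed n)) \<noteq> snd (ends G (ed n))"
    "w (Suc n) \<in> verts G"
    "(fst (ends G (ed n)) = w n \<and> snd (ends G (ed n)) = w (Suc n)) \<or>
     (snd (ends G (ed n)) = w n \<and> fst (ends G (ed n)) = w (Suc n))"
proof -
  obtain e where e: "e \<in> incident G (w n)" "outward_deriv G \<iota> f (w n) e > 0"
    using inv[of n] ns by blast
  have wn: "w n \<in> verts G - bverts G" using inv[of n] ns by (simp add: stop_def)
  note nx = nxt[OF wn e, folded ed_def]
  have nz: "outward_deriv G \<iota> f (w n) (ed n) \<noteq> 0" using nx by simp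
  note on = outward_nz[OF nx(1) nz]
  show "ed n \<in> incident G (w n)" using nx by simp
  then show ee: "ed n \<in> edges G" by (simp add: incident_def)
  show ws: "w (Suc n) = other G (w n) (ed n)" using ns by (simp add: w_Suc)
  show "F (w (Suc n)) < F (w n)" using on(2) nx(2) elen_pos[OF ee] ws
    by (simp add: divide_less_0_iff)
  show "fst (ends G (ed n)) \<noteq> snd (ends G (ed n))" using on by simp
  show "w (Suc n) \<in> verts G" using on ws by simp
  show "(fst (ends G (ed n)) = w n \<and> snd (ends G (ed n)) = w (Suc n)) \<or>
     (snd (ends G (ed n)) = w n \<and> fst (ends G (ed n)) = w (Suc n))"
    using nx(1) ws by (auto simp: incident_def other_def)
qed

lemma stop_Suc: "stop n \<Longrightarrow> stop (Suc n) \<and> w (Suc n) = w n"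
  by (simp add: w_Suc stop_def)

lemma stop_mono: "stop n \<Longrightarrow> n \<le> m \<Longrightarrow> stop m \<and> w m = w n"
proof (induction m)
  case 0 then show ?case by simp
next
  case (Suc m)
  then show ?case
    using stop_Suc by (cases "n = Suc m") (auto simp: le_Suc_eq)
qed

lemma nstop_le: "\<not> stop m \<Longrightarrow> n \<le> m \<Longrightarrow> \<not> stop n"
  using stop_mono by blast

lemma F_mono_Suc: "F (w (Suc n)) \<le> F (w n)"
  using step(4)[of n] stop_Suc[of n] by (cases "stop n") auto

lemma F_le_u0: "F (w n) \<le> F u0"
proof (induction n)
  case 0 then show ?case by (simp add: w_0)
next
  case (Suc n) then show ?case using F_mono_Suc[of n] by linarith
qed

lemma F_lt_t: "F (w n) < t" using F_le_u0[of n] F_u0 by linarith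

lemma F_strict: "\<not> stop k \<Longrightarrow> j < k \<Longrightarrow> F (w k) < F (w j)"
proof (induction k)
  case 0 then show ?case by simp
next
  case (Suc k)
  have nk: "\<not> stop k" using Suc.prems nstop_le by force
  have "F (w (Suc k)) < F (w k)" using step(4)[OF nk] .
  then show ?case using Suc nk by (cases "j = k") auto
qed

lemma ed_inj: "\<not> stop k \<Longrightarrow> j < k \<Longrightarrow> ed j \<noteq> ed k"
proof
  assume nk: "\<not> stop k" and jk: "j < k" and eq: "ed j = ed k"
  have nj: "\<not> stop j" using nk jk nstop_le by force
  have "F (w k) < F (w j)" using F_strict nk jk by blast
  moreover have "F (w (Suc k)) < F (w j)" using F_strict[OF nk jk] step(4)[OF nk] by linarith
  moreover have "w j = w k \<or> w j = w (Suc k)" using step(7)[OF nj] step(7)[OF nk] eq by auto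
  ultimately show False by auto
qed

lemma seg_range: "\<not> stop n \<Longrightarrow> r \<in> {0..lnn n} \<Longrightarrow>
   (if fst (ends G (ed n)) = w n then r else elen G (ed n) - r) \<in> {0..elen G (ed n)}"
  by (auto simp: lnn_def)

lemma seg_gpts: "\<not> stop n \<Longrightarrow> r \<in> {0..lnn n} \<Longrightarrow> seg n r \<in> gpts G"
  unfolding seg_def using seg_range gpos_gpts[OF graph step(2)] by blast

lemma seg_0: "\<not> stop n \<Longrightarrow> seg n 0 = GV (w n)"
  using step(7)[of n] step(2)[of n] elen_pos[OF step(2)[of n]] unfolding seg_def
  by (auto simp: gpos_0 gpos_len)

lemma seg_end: "\<not> stop n \<Longrightarrow> seg n (lnn n) = GV (w (Suc n))"
  using step(7)[of n] step(2)[of n] elen_pos[OF step(2)[of n]] unfolding seg_def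
  by (auto simp: gpos_0 gpos_len lnn_def)

lemma seg_val: "\<not> stop n \<Longrightarrow> r \<in> {0..lnn n} \<Longrightarrow> f (\<iota> (seg n r)) < t"
proof -
  assume ns: "\<not> stop n" and r: "r \<in> {0..lnn n}"
  have "f (\<iota> (seg n r)) \<le> max (F (fst (ends G (ed n)))) (F (snd (ends G (ed n))))"
    unfolding seg_def by (rule val_le_max[OF step(2)[OF ns] seg_range[OF ns r]])
  also have "\<dots> < t" using step(7)[OF ns] F_lt_t[of n] F_lt_t[of "Suc n"] by auto
  finally show ?thesis .
qed

lemma seg_dist: "\<not> stop n \<Longrightarrow> r \<in> {0..lnn n} \<Longrightarrow> r' \<in> {0..lnn n} \<Longrightarrow> gdist G (seg n r) (seg n r') \<le> \<bar>r - r'\<bar>"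
  unfolding seg_def using gdist_seg[OF step(2) seg_range seg_range, of n r r'] by (auto simp: abs_minus_commute)

end




lemma glue:
  assumes G: "metric_graph G" and abc: "a \<le> b" "b \<le> c"
    and p1: "\<forall>s\<in>{a..b}. \<gamma> s \<in> gpts G" and p2: "\<forall>s\<in>{b..c}. \<gamma> s \<in> gpts G"
    and l1: "\<forall>s\<in>{a..b}. \<forall>s'\<in>{a..b}. gdist G (\<gamma> s) (\<gamma> s') \<le> \<bar>s - s'\<bar>"
    and l2: "\<forall>s\<in>{b..c}. \<forall>s'\<in>{b..c}. gdist G (\<gamma> s) (\<gamma> s') \<le> \<bar>s - s'\<bar>"
  shows "\<forall>s\<in>{a..c}. \<forall>s'\<in>{a..c}. gdist G (\<gamma> s) (\<gamma> s') \<le> \<bar>s - s'\<bar>"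
proof (intro ballI)
  fix s s' assume s: "s \<in> {a..c}" and s': "s' \<in> {a..c}"
  have b1: "b \<in> {a..b}" "b \<in> {b..c}" using abc by auto
  have pa: "\<gamma> x \<in> gpts G" if "x \<in> {a..c}" for x
  proof (cases "x \<le> b")
    case True then show ?thesis using p1 that by auto
  next
    case False then show ?thesis using p2 that by auto
  qed
  have tri: "gdist G (\<gamma> x) (\<gamma> y) \<le> gdist G (\<gamma> x) (\<gamma> b) + gdist G (\<gamma> b) (\<gamma> y)"
    if "x \<in> {a..c}" "y \<in> {a..c}" for x y
    using gdist_triangle[OF G pa[OF that(1)] p1[rule_format, OF b1(1)] pa[OF that(2)]] .
  consider "s \<le> b" "s' \<le> b" | "s \<ge> b" "s' \<ge> b" | "s \<le> b" "s' \<ge> b" | "s \<ge> b" "s' \<le> b"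
    by linarith
  then show "gdist G (\<gamma> s) (\<gamma> s') \<le> \<bar>s - s'\<bar>"
  proof cases
    case 1 then show ?thesis using l1 s s' by auto
  next
    case 2 then show ?thesis using l2 s s' by auto
  next
    case 3
    have "gdist G (\<gamma> s) (\<gamma> b) \<le> \<bar>s - b\<bar>" using l1[rule_format, of s b] s 3 b1 by simp
    moreover have "gdist G (\<gamma> b) (\<gamma> s') \<le> \<bar>b - s'\<bar>" using l2[rule_format, of b s'] s' 3 b1 by simp
    ultimately show ?thesis using tri[OF s s'] 3 by linarith
  next
    case 4
    have "gdist G (\<gamma> s) (\<gamma> b) \<le> \<bar>s - b\<bar>" using l2[rule_format, of s b] s 4 b1 by simp
    moreover have "gdist G (\<gamma> b) (\<gamma> s') \<le> \<bar>b - s'\<bar>" using l1[rule_format, of b s'] s' 4 b1 by simp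
    ultimately show ?thesis using tri[OF s s'] 4 by linarith
  qed
qed

context desc begin

lemma M_eq: "M = closure (\<iota> ` gpts G)" using compl by (simp add: is_completion_def)
lemma iso: "x \<in> gpts G \<Longrightarrow> y \<in> gpts G \<Longrightarrow> dist (\<iota> x) (\<iota> y) = gdist G x y"
  using compl by (simp add: is_completion_def)
lemma in_M: "x \<in> gpts G \<Longrightarrow> \<iota> x \<in> M"
proof -
  assume "x \<in> gpts G"
  then have "\<iota> x \<in> \<iota> ` gpts G" by (rule imageI)
  then show ?thesis unfolding M_eq using closure_subset by (rule subsetD[rotated])
qed

lemma lnn_nonneg: "0 \<le> lnn n"
  using elen_pos step(2)[of n] by (auto simp: lnn_def less_imp_le)

lemma edge_meas:
  assumes ns: "\<not> stop j"
  shows "emeasure lborel {s \<in> {0<..<elen G (ed j)}. \<iota> (GE (ed j) s) \<in> S} = ennreal (lnn j)"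
proof -
  have ee: "ed j \<in> edges G" using step(2)[OF ns] .
  have "{s \<in> {0<..<elen G (ed j)}. \<iota> (GE (ed j) s) \<in> S} = {0<..<elen G (ed j)}"
  proof safe
    fix s assume s: "s \<in> {0<..<elen G (ed j)}"
    then have g: "GE (ed j) s = gpos G (ed j) s" by (simp add: gpos_int)
    have sr: "s \<in> {0..elen G (ed j)}" using s by auto
    have "f (\<iota> (GE (ed j) s)) \<le> max (F (fst (ends G (ed j)))) (F (snd (ends G (ed j))))"
      unfolding g by (rule val_le_max[OF ee sr])
    also have "\<dots> < t" using step(7)[OF ns] F_lt_t[of j] F_lt_t[of "Suc j"] by auto
    finally have "f (\<iota> (GE (ed j) s)) \<le> t" by simp
    moreover have "\<iota> (GE (ed j) s) \<in> M" unfolding g by (rule in_M[OF gpos_gpts[OF graph ee sr]])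
    ultimately show "\<iota> (GE (ed j) s) \<in> S" using sub by blast
  qed
  then show ?thesis using elen_pos[OF ee] ns by (simp add: lnn_def)
qed

lemma psum_bound: "(\<Sum>j<N. ennreal (lnn j)) \<le> volume G \<iota> S"
proof -
  define J where "J = {j. j < N \<and> \<not> stop j}"
  define g where "g e = emeasure lborel {s \<in> {0<..<elen G e}. \<iota> (GE e s) \<in> S}" for e
  have "(\<Sum>j<N. ennreal (lnn j)) = (\<Sum>j\<in>J. ennreal (lnn j))"
    unfolding J_def by (rule sum.mono_neutral_right) (auto simp: lnn_def)
  also have "\<dots> = (\<Sum>j\<in>J. g (ed j))"
  proof (rule sum.cong[OF refl])
    fix j assume "j \<in> J"
    then have "\<not> stop j" by (simp add: J_def)
    then show "ennreal (lnn j) = g (ed j)" unfolding g_def by (rule edge_meas[symmetric])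
  qed
  also have "\<dots> = (\<Sum>e\<in>ed ` J. g e)"
  proof -
    have "inj_on ed J"
      unfolding inj_on_def J_def using ed_inj by (metis linorder_neqE_nat mem_Collect_eq)
    then show ?thesis by (simp add: sum.reindex)
  qed
  also have "\<dots> \<le> (\<integral>\<^sup>+e. g e \<partial>count_space (edges G))"
    by (rule sum_le_nn_count) (auto simp: J_def intro: step(2))
  also have "\<dots> = volume G \<iota> S" by (simp add: volume_def g_def)
  finally show ?thesis .
qed

definition "V = enn2real (volume G \<iota> S)"

lemma psum_real: "(\<Sum>j<N. lnn j) \<le> V"
proof -
  have "ennreal (\<Sum>j<N. lnn j) = (\<Sum>j<N. ennreal (lnn j))"
    using lnn_nonneg by (simp add: sum_ennreal)
  also have "\<dots> \<le> volume G \<iota> S" by (rule psum_bound)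
  also have "\<dots> = ennreal V" using vol by (simp add: V_def ennreal_enn2real_if)
  finally show ?thesis by (simp add: V_def ennreal_le_iff)
qed

lemma summ: "summable lnn"
  by (rule summableI_nonneg_bounded[OF lnn_nonneg psum_real])

definition "L = d0 + suminf lnn"

lemma T_0: "T 0 = d0" by (simp add: T_def)
lemma T_Suc: "T (Suc n) = T n + lnn n" by (simp add: T_def)
lemma T_inc: "incseq T" by (rule incseq_SucI) (simp add: T_Suc lnn_nonneg)
lemma T_mono: "m \<le> n \<Longrightarrow> T m \<le> T n" using T_inc by (simp add: incseq_def)
lemma T_lt: "\<not> stop n \<Longrightarrow> T n < T (Suc n)"
  using elen_pos[OF step(2)] by (simp add: T_Suc lnn_def)
lemma T_le_L: "T n \<le> L"
  unfolding T_def L_def using sum_le_suminf[OF summ, of "{..<n}"] lnn_nonneg by simp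
lemma T_lim: "T \<longlonglongrightarrow> L"
  unfolding T_def L_def by (intro tendsto_add tendsto_const summable_LIMSEQ[OF summ])
lemma T_ge_d0: "d0 \<le> T n" using T_mono[of 0 n] by (simp add: T_0)
lemma L_pos: "0 < L" using T_le_L[of 0] d0_pos by (simp add: T_0)

definition "gam s = (if s \<le> d0 then gpos G e0 (first s)
   else seg (LEAST n. s \<le> T (Suc n)) (s - T (LEAST n. s \<le> T (Suc n))))"

lemma gam_first: "s \<le> d0 \<Longrightarrow> gam s = gpos G e0 (first s)" by (simp add: gam_def)

lemma gam_piece:
  assumes ns: "\<not> stop n" and s: "s \<in> {T n..T (Suc n)}"
  shows "gam s = seg n (s - T n)"
proof (cases "s \<le> d0")
  case True
  have sT: "s = T n" "s = d0" using True s T_ge_d0[of n] by simp_all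
  have n0: "n = 0"
  proof (rule ccontr)
    assume "n \<noteq> 0"
    then have "\<not> stop 0" using ns nstop_le by blast
    then have "T 0 < T 1" using T_lt by simp
    moreover have "T 1 \<le> T n" using \<open>n \<noteq> 0\<close> by (intro T_mono) simp
    ultimately show False using sT by (simp add: T_0)
  qed
  have "gam s = GV u0" using gam_first[OF True] first_d0 sT(2) by simp
  moreover have "seg n (s - T n) = GV u0" using seg_0[OF ns] n0 sT(1) by (simp add: w_0)
  ultimately show ?thesis by simp
next
  case False
  define m where "m = (LEAST n. s \<le> T (Suc n))"
  have g: "gam s = seg m (s - T m)" using False by (simp add: gam_def m_def)
  have sn: "s \<le> T (Suc n)" using s by simp
  have mle: "m \<le> n" unfolding m_def using Least_le[of "\<lambda>n. s \<le> T (Suc n)" n, OF sn] .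
  have sm: "s \<le> T (Suc m)" unfolding m_def using LeastI[of "\<lambda>n. s \<le> T (Suc n)" n, OF sn] .
  show ?thesis
  proof (cases "s = T n")
    case False
    then have sgt: "T n < s" using s by simp
    have "m = n"
    proof (rule ccontr)
      assume "m \<noteq> n" then have "Suc m \<le> n" using mle by simp
      then have "T (Suc m) \<le> T n" by (rule T_mono)
      then show False using sm sgt by linarith
    qed
    then show ?thesis using g by simp
  next
    case True
    have "n \<noteq> 0"
    proof
      assume "n = 0"
      then have "s = d0" using True T_0 by simp
      then show False using \<open>\<not> s \<le> d0\<close> by simp
    qed
    then obtain k where k: "n = Suc k" using not0_implies_Suc by blast
    have nk: "\<not> stop k" using nstop_le[OF ns, of k] k by simp
    have sk: "s \<le> T (Suc k)" using True k by simp
    have mk: "m \<le> k" unfolding m_def using Least_le[of "\<lambda>n. s \<le> T (Suc n)" k, OF sk] .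
    have "m = k"
    proof (rule ccontr)
      assume "m \<noteq> k" then have "Suc m \<le> k" using mk by simp
      then have "T (Suc m) \<le> T k" by (rule T_mono)
      moreover have "T k < T (Suc k)" using T_lt[OF nk] .
      moreover have "s = T (Suc k)" using True k by simp
      ultimately show False using sm by linarith
    qed
    have sl: "s - T k = lnn k" using True k T_Suc[of k] by simp
    have "gam s = seg k (lnn k)" using g \<open>m = k\<close> sl by simp
    also have "\<dots> = GV (w n)" using seg_end[OF nk] k by simp
    also have "\<dots> = seg n (s - T n)" using seg_0[OF ns] True by simp
    finally show ?thesis .
  qed
qed

lemma main_T:
  "(\<forall>s\<in>{0..T n}. gam s \<in> gpts G) \<and>
   (\<forall>s\<in>{0..T n}. \<forall>s'\<in>{0..T n}. gdist G (gam s) (gam s') \<le> \<bar>s - s'\<bar>) \<and>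
   (\<forall>s\<in>{0..T n}. f (\<iota> (gam s)) \<le> t) \<and>
   (\<forall>s\<in>{0..T n}. gdist G (gam s) (GV (w n)) \<le> T n - s)"
proof (induction n)
  case 0
  have p: "\<forall>s\<in>{0..T 0}. gam s \<in> gpts G"
    using gam_first gpos_gpts[OF graph e0 first_range] by (simp add: T_0)
  have l: "\<forall>s\<in>{0..T 0}. \<forall>s'\<in>{0..T 0}. gdist G (gam s) (gam s') \<le> \<bar>s - s'\<bar>"
  proof (intro ballI)
    fix s s' assume "s \<in> {0..T 0}" "s' \<in> {0..T 0}"
    then have r: "s \<in> {0..d0}" "s' \<in> {0..d0}" by (auto simp: T_0)
    have "gdist G (gam s) (gam s') \<le> \<bar>first s' - first s\<bar>"
      using gdist_seg[OF e0 first_range[OF r(1)] first_range[OF r(2)]] gam_first r by simp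
    also have "\<dots> = \<bar>s - s'\<bar>" by (simp add: first_def abs_minus_commute)
    finally show "gdist G (gam s) (gam s') \<le> \<bar>s - s'\<bar>" .
  qed
  have v: "\<forall>s\<in>{0..T 0}. f (\<iota> (gam s)) \<le> t"
    using gam_first first_val by (simp add: T_0)
  have d: "\<forall>s\<in>{0..T 0}. gdist G (gam s) (GV (w 0)) \<le> T 0 - s"
  proof (intro ballI)
    fix s assume "s \<in> {0..T 0}"
    then have r: "s \<in> {0..d0}" by (auto simp: T_0)
    have dr: "d0 \<in> {0..d0}" using d0_pos by simp
    have "gdist G (gam s) (GV (w 0)) \<le> \<bar>first d0 - first s\<bar>"
      using gdist_seg[OF e0 first_range[OF r] first_range[OF dr]] gam_first r first_d0
      by (simp add: w_0)
    also have "\<dots> = T 0 - s" using r by (simp add: first_def T_0)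
    finally show "gdist G (gam s) (GV (w 0)) \<le> T 0 - s" .
  qed
  show ?case using p l v d by blast
next
  case (Suc n)
  show ?case
  proof (cases "stop n")
    case True
    then show ?thesis using Suc stop_Suc[OF True] by (simp add: T_Suc lnn_def)
  next
    case False
    have piece: "gam s = seg n (s - T n)" and rr: "s - T n \<in> {0..lnn n}" if "s \<in> {T n..T (Suc n)}" for s
      using gam_piece[OF False that] that by (auto simp: T_Suc)
    have Tn: "0 \<le> T n" using T_ge_d0[of n] d0_pos by simp
    have p2: "\<forall>s\<in>{T n..T (Suc n)}. gam s \<in> gpts G"
      using piece rr seg_gpts[OF False] by simp
    have l2: "\<forall>s\<in>{T n..T (Suc n)}. \<forall>s'\<in>{T n..T (Suc n)}. gdist G (gam s) (gam s') \<le> \<bar>s - s'\<bar>"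
    proof (intro ballI)
      fix s s' assume s: "s \<in> {T n..T (Suc n)}" and s': "s' \<in> {T n..T (Suc n)}"
      have "gdist G (gam s) (gam s') \<le> \<bar>(s - T n) - (s' - T n)\<bar>"
        using seg_dist[OF False rr[OF s] rr[OF s']] piece[OF s] piece[OF s'] by simp
      then show "gdist G (gam s) (gam s') \<le> \<bar>s - s'\<bar>" by simp
    qed
    have un: "{0..T (Suc n)} = {0..T n} \<union> {T n..T (Suc n)}" using Tn T_mono[of n "Suc n"] by auto
    have p: "\<forall>s\<in>{0..T (Suc n)}. gam s \<in> gpts G" using un p2 Suc.IH by blast
    have IH1: "\<forall>s\<in>{0..T n}. gam s \<in> gpts G" using Suc.IH by blast
    have IH2: "\<forall>s\<in>{0..T n}. \<forall>s'\<in>{0..T n}. gdist G (gam s) (gam s') \<le> \<bar>s - s'\<bar>" using Suc.IH by blast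
    have l: "\<forall>s\<in>{0..T (Suc n)}. \<forall>s'\<in>{0..T (Suc n)}. gdist G (gam s) (gam s') \<le> \<bar>s - s'\<bar>"
      by (rule glue[OF graph Tn T_mono[of n "Suc n"] IH1 p2 IH2 l2]) simp
    have v: "\<forall>s\<in>{0..T (Suc n)}. f (\<iota> (gam s)) \<le> t"
    proof
      fix s assume s: "s \<in> {0..T (Suc n)}"
      show "f (\<iota> (gam s)) \<le> t"
      proof (cases "s \<le> T n")
        case True then show ?thesis using Suc.IH s by auto
      next
        case False
        then have s': "s \<in> {T n..T (Suc n)}" using s by simp
        show ?thesis using seg_val[OF \<open>\<not> stop n\<close> rr[OF s']] piece[OF s'] by simp
      qed
    qed
    have wv: "GV (w n) \<in> gpts G" "GV (w (Suc n)) \<in> gpts G"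
      using inv[of n] step(6)[OF False] by (auto simp: gpts_def)
    have ww: "gdist G (GV (w n)) (GV (w (Suc n))) \<le> lnn n"
      using seg_dist[OF False, of 0 "lnn n"] seg_0[OF False] seg_end[OF False] lnn_nonneg[of n] by simp
    have d: "\<forall>s\<in>{0..T (Suc n)}. gdist G (gam s) (GV (w (Suc n))) \<le> T (Suc n) - s"
    proof (intro ballI)
      fix s assume s: "s \<in> {0..T (Suc n)}"
      show "gdist G (gam s) (GV (w (Suc n))) \<le> T (Suc n) - s"
      proof (cases "s \<le> T n")
        case True
        then have s': "s \<in> {0..T n}" using s by simp
        have "gdist G (gam s) (GV (w (Suc n))) \<le> gdist G (gam s) (GV (w n)) + gdist G (GV (w n)) (GV (w (Suc n)))"
          using gdist_triangle[OF graph _ wv] Suc.IH s' by blast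
        moreover have "gdist G (gam s) (GV (w n)) \<le> T n - s" using Suc.IH s' by blast
        ultimately show ?thesis using ww T_Suc[of n] by linarith
      next
        case False
        then have s': "s \<in> {T n..T (Suc n)}" using s by simp
        have "gdist G (gam s) (GV (w (Suc n))) \<le> \<bar>(s - T n) - lnn n\<bar>"
          using piece[OF s'] rr[OF s'] seg_dist[OF \<open>\<not> stop n\<close>, of "s - T n" "lnn n"] seg_end[OF \<open>\<not> stop n\<close>]
            lnn_nonneg[of n] by simp
        then show ?thesis using s' by (simp add: T_Suc)
      qed
    qed
    show ?thesis using p l v d by blast
  qed
qed

end



context desc begin

lemma ex_T: "x < L \<Longrightarrow> \<exists>n. x < T n"
proof -
  assume "x < L"
  then have "eventually (\<lambda>n. x < T n) sequentially" using order_tendstoD(1)[OF T_lim] by blast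
  then show ?thesis using eventually_sequentially by (metis order_refl)
qed

lemma wpts: "GV (w n) \<in> gpts G" using inv[of n] by (simp add: gpts_def)

lemma wstep: "gdist G (GV (w j)) (GV (w (Suc j))) \<le> lnn j"
proof (cases "stop j")
  case True
  then show ?thesis using stop_Suc[OF True] gdist_refl_le[of G "GV (w j)"] by (simp add: lnn_def)
next
  case False
  show ?thesis
    using seg_dist[OF False, of 0 "lnn j"] seg_0[OF False] seg_end[OF False] lnn_nonneg[of j] by simp
qed

lemma vchain: "gdist G (GV (w m)) (GV (w (m + k))) \<le> T (m + k) - T m"
proof (induction k)
  case 0 then show ?case using gdist_refl_le[of G "GV (w m)"] by simp
next
  case (Suc k)
  have "gdist G (GV (w m)) (GV (w (m + Suc k))) \<le> gdist G (GV (w m)) (GV (w (m + k))) + gdist G (GV (w (m + k))) (GV (w (Suc (m + k))))"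
    using gdist_triangle[OF graph wpts wpts wpts] by simp
  also have "\<dots> \<le> (T (m + k) - T m) + lnn (m + k)" using Suc.IH wstep[of "m + k"] by linarith
  also have "\<dots> = T (m + Suc k) - T m" by (simp add: T_Suc)
  finally show ?case .
qed

definition "P n = \<iota> (GV (w n))"

lemma pdist: "dist (P m) (P n) \<le> \<bar>T m - T n\<bar>"
proof (cases "m \<le> n")
  case True
  then obtain k where k: "n = m + k" using le_Suc_ex by blast
  have "dist (P m) (P n) = gdist G (GV (w m)) (GV (w n))" unfolding P_def using iso wpts by blast
  also have "\<dots> \<le> T n - T m" using vchain k by simp
  finally show ?thesis by simp
next
  case False
  then obtain k where k: "m = n + k" using le_Suc_ex[of n m] by auto
  have "dist (P m) (P n) = dist (P n) (P m)" by (rule dist_commute)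
  also have "\<dots> = gdist G (GV (w n)) (GV (w m))" unfolding P_def using iso wpts by blast
  also have "\<dots> \<le> T m - T n" using vchain k by simp
  finally show ?thesis by simp
qed

lemma P_Cauchy: "Cauchy P"
proof -
  have CT: "Cauchy T" using LIMSEQ_imp_Cauchy[OF T_lim] .
  show ?thesis unfolding Cauchy_def
  proof (intro allI impI)
    fix e :: real assume e: "0 < e"
    obtain N where N: "\<forall>m\<ge>N. \<forall>n\<ge>N. dist (T m) (T n) < e" using CT e unfolding Cauchy_def by blast
    show "\<exists>N. \<forall>m\<ge>N. \<forall>n\<ge>N. dist (P m) (P n) < e"
    proof (intro exI allI impI)
      fix m n assume "N \<le> m" "N \<le> n"
      then have "dist (T m) (T n) < e" using N by blast
      then show "dist (P m) (P n) < e" using pdist[of m n] by (simp add: dist_real_def)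
    qed
  qed
qed

lemma P_M: "P n \<in> M" unfolding P_def using in_M wpts by blast

definition "plim = (SOME p. p \<in> M \<and> P \<longlonglongrightarrow> p)"

lemma plim: "plim \<in> M" "P \<longlonglongrightarrow> plim"
proof -
  have "complete M" using compl unfolding is_completion_def by blast
  then have "\<exists>l\<in>M. P \<longlonglongrightarrow> l" using P_Cauchy P_M unfolding complete_def by blast
  then have "\<exists>p. p \<in> M \<and> P \<longlonglongrightarrow> p" by blast
  then show "plim \<in> M" "P \<longlonglongrightarrow> plim" unfolding plim_def using someI_ex by (metis (mono_tags, lifting))+
qed

lemma gam_bound:
  assumes s: "0 \<le> s" "s < L"
  shows "dist (\<iota> (gam s)) plim \<le> L - s"
proof -
  have ev: "eventually (\<lambda>n. s < T n) sequentially" using order_tendstoD(1)[OF T_lim s(2)] .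
  have "eventually (\<lambda>n. dist (\<iota> (gam s)) plim \<le> T n - s + dist (P n) plim) sequentially"
    using ev
  proof (rule eventually_mono)
    fix n assume sn: "s < T n"
    then have sr: "s \<in> {0..T n}" using s by simp
    have g: "gam s \<in> gpts G" using main_T[of n] sr by blast
    have "dist (\<iota> (gam s)) (P n) = gdist G (gam s) (GV (w n))" unfolding P_def using iso g wpts by blast
    also have "\<dots> \<le> T n - s" using main_T[of n] sr by blast
    finally have "dist (\<iota> (gam s)) (P n) \<le> T n - s" .
    then show "dist (\<iota> (gam s)) plim \<le> T n - s + dist (P n) plim"
      using dist_triangle[of "\<iota> (gam s)" plim "P n"] by linarith
  qed
  moreover have "(\<lambda>n. T n - s + dist (P n) plim) \<longlonglongrightarrow> L - s + dist plim plim"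
    by (intro tendsto_intros T_lim plim(2))
  ultimately have "dist (\<iota> (gam s)) plim \<le> L - s + dist plim plim"
    using tendsto_le[OF trivial_limit_sequentially _ tendsto_const] by blast
  then show ?thesis by simp
qed

lemma gam_tendsto: "((\<lambda>s. \<iota> (gam s)) \<longlongrightarrow> plim) (at_left L)"
proof (rule tendstoI)
  fix e :: real assume e: "0 < e"
  have "max 0 (L - e) < L" using e L_pos by simp
  then have "eventually (\<lambda>s. s \<in> {max 0 (L - e)<..<L}) (at_left L)" by (rule eventually_at_left_real)
  then show "eventually (\<lambda>s. dist (\<iota> (gam s)) plim < e) (at_left L)"
  proof (rule eventually_mono)
    fix s assume s: "s \<in> {max 0 (L - e)<..<L}"
    then have "dist (\<iota> (gam s)) plim \<le> L - s" using gam_bound by simp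
    then show "dist (\<iota> (gam s)) plim < e" using s by simp
  qed
qed

lemma plim_bdry: "plim \<in> bdry G \<iota> M"
proof -
  have "plim \<notin> \<iota> ` gint G"
  proof
    assume "plim \<in> \<iota> ` gint G"
    then obtain y where y: "y \<in> gint G" "plim = \<iota> y" by blast
    have ypts: "y \<in> gpts G" using y by (simp add: gint_def)
    obtain \<delta> where d: "\<delta> > 0" "\<forall>v \<in> verts G. GV v \<noteq> y \<longrightarrow> \<delta> \<le> gdist G y (GV v)"
      using gint_sep[OF graph y(1)] by blast
    have wv: "w n \<in> verts G" for n using inv[of n] by simp
    show False
    proof (cases "\<exists>k. stop k")
      case True
      then obtain k where k: "stop k" by blast
      have "eventually (\<lambda>n. P n = P k) sequentially"
        unfolding eventually_sequentially P_def using stop_mono[OF k] by metis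
      then have "P \<longlonglongrightarrow> P k" by (rule tendsto_eventually)
      then have "plim = P k" using plim(2) LIMSEQ_unique by blast
      then have "dist (\<iota> y) (\<iota> (GV (w k))) = 0" using y by (simp add: P_def)
      then have gz: "gdist G y (GV (w k)) = 0" using iso ypts wpts by metis
      have "GV (w k) \<noteq> y" using y(1) k by (auto simp: gint_def stop_def)
      then show False using d gz wv by fastforce
    next
      case False
      then have ns: "\<not> stop n" for n by blast
      have "eventually (\<lambda>n. dist (P n) plim < \<delta>) sequentially"
        using plim(2) d(1) by (rule tendstoD)
      then obtain N where N: "\<forall>n\<ge>N. dist (P n) plim < \<delta>" unfolding eventually_sequentially by blast
      have eq: "GV (w n) = y" if "n \<ge> N" for n
      proof (rule ccontr)
        assume ne: "GV (w n) \<noteq> y"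
        have "dist (P n) plim = gdist G y (GV (w n))"
          unfolding P_def y(2) using iso ypts wpts by (simp add: dist_commute)
        then show False using N that d(2) wv ne by fastforce
      qed
      have e1: "GV (w N) = y" using eq[of N] by simp
      have e2: "GV (w (Suc N)) = y" using eq[of "Suc N"] by simp
      have "w N = w (Suc N)" using e1 e2 by (metis gpt.inject(1))
      then show False using step(4)[OF ns[of N]] by simp
    qed
  qed
  then show ?thesis using plim(1) by (simp add: bdry_def)
qed

lemma desc_main:
  "\<exists>\<gamma> L p. graph_path G \<gamma> L \<and> \<gamma> 0 = GE e0 s0 \<and>
     (\<forall>s \<in> {0..<L}. f (\<iota> (\<gamma> s)) \<le> t) \<and>
     p \<in> bdry G \<iota> M \<and> ((\<lambda>s. \<iota> (\<gamma> s)) \<longlongrightarrow> p) (at_left L)"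
proof (intro exI conjI)
  show "graph_path G gam L" unfolding graph_path_def
  proof (intro conjI ballI L_pos)
    fix s assume s: "s \<in> {0..<L}"
    then obtain n where "s < T n" using ex_T by auto
    then show "gam s \<in> gpts G" using main_T[of n] s by auto
  next
    fix s s' assume s: "s \<in> {0..<L}" and s': "s' \<in> {0..<L}"
    then obtain n where n: "max s s' < T n" using ex_T[of "max s s'"] by auto
    then have "s \<in> {0..T n}" "s' \<in> {0..T n}" using s s' by auto
    then show "gdist G (gam s) (gam s') \<le> \<bar>s - s'\<bar>" using main_T[of n] by blast
  qed
  show "gam 0 = GE e0 s0" using gam_first[of 0] d0_pos first_0 by simp
  show "\<forall>s\<in>{0..<L}. f (\<iota> (gam s)) \<le> t"
  proof
    fix s assume s: "s \<in> {0..<L}"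
    then obtain n where "s < T n" using ex_T by auto
    then show "f (\<iota> (gam s)) \<le> t" using main_T[of n] s by auto
  qed
  show "plim \<in> bdry G \<iota> M" by (rule plim_bdry)
  show "((\<lambda>s. \<iota> (gam s)) \<longlongrightarrow> plim) (at_left L)" by (rule gam_tendsto)
qed

end


theorem proposition3p11:
  fixes G :: "('v, 'e) mgraph"
    and \<iota> :: "('v, 'e) gpt \<Rightarrow> 'm::metric_space"
    and M :: "'m set"
    and f :: "'m \<Rightarrow> real"
    and E :: "'m set"
    and C \<epsilon> t :: real
  assumes graph: "metric_graph G"
    and compl: "is_completion G \<iota> M"
    and cpt: "compact M"
    and tdisc: "totally_disconnected (bdry G \<iota> M)"
    and E_clopen: "clopen_in (bdry G \<iota> M) E"
    and E_ne: "E \<noteq> {}"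
    and Ec_ne: "bdry G \<iota> M - E \<noteq> {}"
    and harm: "harmonic G \<iota> M f"
    and C_nonneg: "C \<ge> 0"
    and f_E: "\<forall>x \<in> E. f x = C"
    and f_Ec: "\<forall>x \<in> bdry G \<iota> M - E. f x > C"
    and eps: "\<epsilon> > 0"
    and vol: "volume G \<iota> (nbhd M E \<epsilon>) < \<infinity>"
    and reg: "regular_value G \<iota> M f t"
    and t_lo: "C < t"
    and t_hi: "t < (INF x \<in> bdry G \<iota> M - E. f x)"
    and sub: "{x \<in> M. f x \<le> t} \<subseteq> nbhd M E \<epsilon>"
  shows "\<forall>x \<in> gpts G. f (\<iota> x) = t \<longrightarrow>
           (\<exists>\<gamma> L p. graph_path G \<gamma> L \<and> \<gamma> 0 = x \<and>
              (\<forall>s \<in> {0..<L}. f (\<iota> (\<gamma> s)) \<le> t) \<and>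
              p \<in> bdry G \<iota> M \<and> ((\<lambda>s. \<iota> (\<gamma> s)) \<longlongrightarrow> p) (at_left L))"
proof (intro ballI impI)
  fix x assume x: "x \<in> gpts G" and fx: "f (\<iota> x) = t"
  interpret hg G \<iota> M f using graph compl harm by unfold_locales
  have ncv: "\<not> critical_value G \<iota> f t" using reg by (simp add: regular_value_def)
  have "x \<notin> GV ` verts G"
  proof
    assume "x \<in> GV ` verts G"
    then have "critical_point G \<iota> f x" using x by (simp add: critical_point_def)
    then show False using ncv fx by (auto simp: critical_value_def)
  qed
  then obtain e0 s0 where xe: "x = GE e0 s0" and e0: "e0 \<in> edges G" and s0: "0 < s0" "s0 < elen G e0"
    using x by (auto simp: gpts_def)
  have neq: "F (fst (ends G e0)) \<noteq> F (snd (ends G e0))"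
  proof
    assume eq: "F (fst (ends G e0)) = F (snd (ends G e0))"
    have c: "f (\<iota> (gpos G e0 r)) = F (fst (ends G e0))" if "r \<in> {0<..<elen G e0}" for r
      using lin[OF e0, of r] eq that by simp
    have "((\<lambda>r. F (fst (ends G e0))) has_real_derivative 0) (at s0)" by (rule DERIV_const)
    then have "((\<lambda>r. f (\<iota> (gpos G e0 r))) has_real_derivative 0) (at s0)"
      by (rule has_field_derivative_transform_within_open[where S="{0<..<elen G e0}"])
         (use s0 c in auto)
    then have "critical_point G \<iota> f x" using x xe by (auto simp: critical_point_def)
    then show False using ncv fx by (auto simp: critical_value_def)
  qed
  interpret desc G \<iota> M f e0 s0 "nbhd M E \<epsilon>"
    using e0 s0 neq vol sub fx xe by unfold_locales auto
  show "\<exists>\<gamma> L p. graph_path G \<gamma> L \<and> \<gamma> 0 = x \<and>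
              (\<forall>s \<in> {0..<L}. f (\<iota> (\<gamma> s)) \<le> t) \<and>
              p \<in> bdry G \<iota> M \<and> ((\<lambda>s. \<iota> (\<gamma> s)) \<longlongrightarrow> p) (at_left L)"
    using desc_main fx xe by simp
qed

end
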